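(* Let $C$ be a program. Then: (1) (mut) $\mathsf{ert}[\![\langle e\rangle:=e']\!]([e\mapsto e'])\preceq[e\mapsto -]$; (2) (lkp) $\mathsf{ert}[\![x:=\langle e\rangle]\!]\big([x=z\wedge\mathsf{emp}]\oplus[e[x/y]\mapsto z]\big)\preceq[x=y\wedge\mathsf{emp}]\oplus[e\mapsto z]$; (3) (alc) if $x$ does not occur in $e$, then $\mathsf{ert}[\![x:=\mathtt{alloc}(e)]\!]\big(\bigoplus_{i=1}^{e}[x+i-1\mapsto 0]\big)\preceq[\mathsf{emp}]$; (4) (aux) for all $f,g\in\mathbb{T}$ and every variable $y$ not occurring in $C$: $\mathsf{ert}[\![C]\!](f)\preceq g$ implies $\mathsf{ert}[\![C]\!](\inf y\colon f)\preceq\inf y\colon g$.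
   Context: States and programs. Fix a finite set $\mathrm{Vars}$ of variables; values are $\mathbb{N}$, locations are $\mathbb{N}_{>0}$. A stack is $s\colon \mathrm{Vars}\to\mathbb{N}$; a heap is a partial map $h$ from a finite set $\mathrm{dom}(h)\subseteq\mathbb{N}_{>0}$ to $\mathbb{N}$. $h_1\perp h_2$ means disjoint domains; then $h_1\star h_2$ is their union; $h_\emptyset$ is the empty heap. $\mathsf{States}$ is the set of pairs $(s,h)$. $s(e)$ is the value of a (heap-independent) arithmetic expression $e$ under $s$, $s\models\varphi$ means the Boolean expression $\varphi$ holds under $s$, $s[x\mapsto v]$ is the updated stack; $e[x/y]$ is syntactic substitution of variable $y$ for $x$ in $e$. Programs are generated by $C ::= \mathtt{tick}(e) \mid x:=e \mid x:=\mathtt{alloc}(e) \mid \langle e\rangle:=e' \mid x:=\langle e\rangle \mid \mathtt{free}(e) \mid \{C\}[p]\{C\} \mid \mathtt{if}(\varphi)\{C\}\mathtt{else}\{C\} \mid C;C \mid \mathtt{while}(\varphi)\{C\}$, where $p$ is an expression with $s(p)\in[0,1]\cap\mathbb{Q}$ for all $s$. Runtimes. $\mathbb{T}$ is the set of functions $\mathsf{States}\to[0,\infty]$, ordered pointwise by $\preceq$; arithmetic is pointwise with $0\cdot\infty=0$. $[\varphi]$ is the $0/1$-valued Iverson bracket. Truncated subtraction: $a\dot- b=\max(a-b,0)$, $\infty\dot- b=\infty$ for finite $b$, $a\dot-\infty=0$. $(f\oplus g)(s,h)=\min\{f(s,h_1)+g(s,h_2)\mid h=h_1\star h_2\}$;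 $(f \mathbin{-\!\!\ominus} g)(s,h)=\sup\{g(s,h\star h')\dot- f(s,h')\mid h'\perp h\}$; $(\inf y\colon f)(s,h)=\inf_{v\in\mathbb{N}} f(s[y\mapsto v],h)$, $(\sup y\colon f)(s,h)=\sup_{v\in\mathbb{N}}f(s[y\mapsto v],h)$; $f[x/e](s,h)=f(s[x\mapsto s(e)],h)$. Atomic ($0/\infty$-valued) runtimes: $[\mathsf{emp}](s,h)=0$ if $h=h_\emptyset$, else $\infty$; $[\varphi\wedge\mathsf{emp}](s,h)=0$ if $s\models\varphi$ and $h=h_\emptyset$, else $\infty$; $\mathsf{tm}(e)(s,h)=s(e)$ if $h=h_\emptyset$, else $\infty$; $[e\mapsto e'](s,h)=0$ if $\mathrm{dom}(h)=\{s(e)\}$ and $h(s(e))=s(e')$, else $\infty$; $[e\mapsto -](s,h)=0$ if $\mathrm{dom}(h)=\{s(e)\}$, else $\infty$; $\bigoplus_{i=1}^{e} f_i$ is evaluated at $(s,h)$ as the separating sum over $i=1,\dots,s(e)$ (empty one: $[\mathsf{emp}]$). Expected runtime transformer $\mathsf{ert}[\![C]\!]\colon\mathbb{T}\to\mathbb{T}$ (with $v$ fresh): $\mathsf{ert}[\![\mathtt{tick}(e)]\!](f)=\mathsf{tm}(e)\oplus f$; $\mathsf{ert}[\![x:=e]\!](f)=f[x/e]$; $\mathsf{ert}[\![x:=\mathtt{alloc}(e)]\!](f)=\sup v\colon (\bigoplus_{i=1}^{e}[v+i-1\mapsto 0])\mathbin{-\!\!\ominus} f[x/v]$; $\mathsf{ert}[\![\langle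 e\rangle:=e']\!](f)=[e\mapsto-]\oplus([e\mapsto e']\mathbin{-\!\!\ominus} f)$; $\mathsf{ert}[\![x:=\langle e\rangle]\!](f)=\inf v\colon [e\mapsto v]\oplus([e\mapsto v]\mathbin{-\!\!\ominus} f[x/v])$; $\mathsf{ert}[\![\mathtt{free}(e)]\!](f)=[e\mapsto-]\oplus f$; $\mathsf{ert}[\![C_1;C_2]\!](f)=\mathsf{ert}[\![C_1]\!](\mathsf{ert}[\![C_2]\!](f))$; conditional: $[\varphi]\cdot\mathsf{ert}[\![C_1]\!](f)+[\neg\varphi]\cdot\mathsf{ert}[\![C_2]\!](f)$; probabilistic choice: $p\cdot\mathsf{ert}[\![C_1]\!](f)+(1-p)\cdot\mathsf{ert}[\![C_2]\!](f)$; $\mathsf{ert}[\![\mathtt{while}(\varphi)\{C\}]\!](f)=\mathrm{lfp}\, g.\ [\neg\varphi]\cdot f+[\varphi]\cdot\mathsf{ert}[\![C]\!](g)$ (least fixed point in $(\mathbb{T},\preceq)$). *)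

theory Defs
  imports Main "HOL-Library.Extended_Nonnegative_Real"
begin

typedef heap = "{h :: nat \<rightharpoonup> nat. finite (dom h) \<and> 0 \<notin> dom h}"
  morphisms hmap Abs_heap
  by (rule exI[of _ Map.empty]) auto

type_synonym 'v stack = "'v \<Rightarrow> nat"
type_synonym 'v state = "'v stack \<times> heap"
type_synonym 'v rt = "'v state \<Rightarrow> ennreal"

text \<open>Expressions are heap-independent and modelled semantically (shallow embedding).\<close>
type_synonym 'v aexp = "'v stack \<Rightarrow> nat"
type_synonym 'v bexp = "'v stack \<Rightarrow> bool"
type_synonym 'v pexp = "'v stack \<Rightarrow> real"

definition hdisj :: "heap \<Rightarrow> heap \<Rightarrow> bool" where
  "hdisj h1 h2 \<longleftrightarrow> dom (hmap h1) \<inter> dom (hmap h2) = {}"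

definition hunion :: "heap \<Rightarrow> heap \<Rightarrow> heap" where
  "hunion h1 h2 = Abs_heap (hmap h1 ++ hmap h2)"

definition hempty :: heap where
  "hempty = Abs_heap Map.empty"

text \<open>Truncated subtraction with a - \<infinity> = 0 and \<infinity> - b = \<infinity> for finite b.\<close>
definition tsub :: "ennreal \<Rightarrow> ennreal \<Rightarrow> ennreal" where
  "tsub a b = (if b = top then 0 else a - b)"

definition sepadd :: "'v rt \<Rightarrow> 'v rt \<Rightarrow> 'v rt" where
  "sepadd f g = (\<lambda>(s, h). INF p \<in> {(h1, h2). hdisj h1 h2 \<and> h = hunion h1 h2}.
                     f (s, fst p) + g (s, snd p))"

definition sepimp :: "'v rt \<Rightarrow> 'v rt \<Rightarrow> 'v rt" where
  "sepimp f g = (\<lambda>(s, h). SUP h' \<in> {h'. hdisj h' h}. tsub (g (s, hunion h h')) (f (s, h')))"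

definition inf_var :: "'v \<Rightarrow> 'v rt \<Rightarrow> 'v rt" where
  "inf_var y f = (\<lambda>(s, h). INF v::nat. f (s(y := v), h))"

definition sup_var :: "'v \<Rightarrow> 'v rt \<Rightarrow> 'v rt" where
  "sup_var y f = (\<lambda>(s, h). SUP v::nat. f (s(y := v), h))"

definition subst_rt :: "'v rt \<Rightarrow> 'v \<Rightarrow> 'v aexp \<Rightarrow> 'v rt" where
  "subst_rt f x e = (\<lambda>(s, h). f (s(x := e s), h))"

text \<open>Syntactic substitution e[x/y] of variable y for x, semantically.\<close>
definition subst_exp :: "'v aexp \<Rightarrow> 'v \<Rightarrow> 'v \<Rightarrow> 'v aexp" where
  "subst_exp e x y = (\<lambda>s. e (s(x := s y)))"

definition iverson :: "'v bexp \<Rightarrow> 'v rt \<Rightarrow> 'v rt" where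
  "iverson \<phi> f = (\<lambda>(s, h). if \<phi> s then f (s, h) else 0)"

definition emp_rt :: "'v rt" where
  "emp_rt = (\<lambda>(s, h). if h = hempty then 0 else top)"

definition emp_and :: "'v bexp \<Rightarrow> 'v rt" where
  "emp_and \<phi> = (\<lambda>(s, h). if \<phi> s \<and> h = hempty then 0 else top)"

definition tm :: "'v aexp \<Rightarrow> 'v rt" where
  "tm e = (\<lambda>(s, h). if h = hempty then of_nat (e s) else top)"

definition pt :: "'v aexp \<Rightarrow> 'v aexp \<Rightarrow> 'v rt" where
  "pt e e' = (\<lambda>(s, h). if dom (hmap h) = {e s} \<and> hmap h (e s) = Some (e' s) then 0 else top)"

definition pt_any :: "'v aexp \<Rightarrow> 'v rt" where
  "pt_any e = (\<lambda>(s, h). if dom (hmap h) = {e s} then 0 else top)"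

fun bigsep_n :: "nat \<Rightarrow> (nat \<Rightarrow> 'v rt) \<Rightarrow> 'v rt" where
  "bigsep_n 0 F = emp_rt"
| "bigsep_n (Suc n) F = sepadd (bigsep_n n F) (F (Suc n))"

text \<open>Separating sum over i = 1, ..., s(e).\<close>
definition bigsep :: "'v aexp \<Rightarrow> (nat \<Rightarrow> 'v rt) \<Rightarrow> 'v rt" where
  "bigsep e F = (\<lambda>(s, h). bigsep_n (e s) F (s, h))"

datatype 'v prog =
    Tick "'v aexp"
  | Assign 'v "'v aexp"
  | Alloc 'v "'v aexp"
  | Mut "'v aexp" "'v aexp"
  | Lookup 'v "'v aexp"
  | Free "'v aexp"
  | PChoice "'v prog" "'v pexp" "'v prog"
  | If "'v bexp" "'v prog" "'v prog"
  | Seq "'v prog" "'v prog"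
  | While "'v bexp" "'v prog"

primrec wf_prog :: "'v prog \<Rightarrow> bool" where
  "wf_prog (Tick e) = True"
| "wf_prog (Assign x e) = True"
| "wf_prog (Alloc x e) = True"
| "wf_prog (Mut e e') = True"
| "wf_prog (Lookup x e) = True"
| "wf_prog (Free e) = True"
| "wf_prog (PChoice C1 p C2) =
     (wf_prog C1 \<and> wf_prog C2 \<and> (\<forall>s. p s \<in> \<rat> \<and> 0 \<le> p s \<and> p s \<le> 1))"
| "wf_prog (If b C1 C2) = (wf_prog C1 \<and> wf_prog C2)"
| "wf_prog (Seq C1 C2) = (wf_prog C1 \<and> wf_prog C2)"
| "wf_prog (While b C) = wf_prog C"

text \<open>Semantic rendering of "variable y does not occur in the expression e".\<close>
definition indep :: "'v \<Rightarrow> ('v stack \<Rightarrow> 'a) \<Rightarrow> bool" where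
  "indep y e \<longleftrightarrow> (\<forall>s v. e (s(y := v)) = e s)"

primrec notin_prog :: "'v \<Rightarrow> 'v prog \<Rightarrow> bool" where
  "notin_prog y (Tick e) = indep y e"
| "notin_prog y (Assign x e) = (y \<noteq> x \<and> indep y e)"
| "notin_prog y (Alloc x e) = (y \<noteq> x \<and> indep y e)"
| "notin_prog y (Mut e e') = (indep y e \<and> indep y e')"
| "notin_prog y (Lookup x e) = (y \<noteq> x \<and> indep y e)"
| "notin_prog y (Free e) = indep y e"
| "notin_prog y (PChoice C1 p C2) = (notin_prog y C1 \<and> notin_prog y C2 \<and> indep y p)"
| "notin_prog y (If b C1 C2) = (indep y b \<and> notin_prog y C1 \<and> notin_prog y C2)"
| "notin_prog y (Seq C1 C2) = (notin_prog y C1 \<and> notin_prog y C2)"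
| "notin_prog y (While b C) = (indep y b \<and> notin_prog y C)"

primrec ert :: "'v prog \<Rightarrow> 'v rt \<Rightarrow> 'v rt" where
  "ert (Tick e) f = sepadd (tm e) f"
| "ert (Assign x e) f = subst_rt f x e"
| "ert (Alloc x e) f = (\<lambda>(s, h). SUP v::nat.
      sepimp (bigsep e (\<lambda>i. pt (\<lambda>_. v + i - 1) (\<lambda>_. 0))) (subst_rt f x (\<lambda>_. v)) (s, h))"
| "ert (Mut e e') f = sepadd (pt_any e) (sepimp (pt e e') f)"
| "ert (Lookup x e) f = (\<lambda>(s, h). INF v::nat.
      sepadd (pt e (\<lambda>_. v)) (sepimp (pt e (\<lambda>_. v)) (subst_rt f x (\<lambda>_. v))) (s, h))"
| "ert (Free e) f = sepadd (pt_any e) f"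
| "ert (PChoice C1 p C2) f = (\<lambda>(s, h).
      ennreal (p s) * ert C1 f (s, h) + ennreal (1 - p s) * ert C2 f (s, h))"
| "ert (If b C1 C2) f = (\<lambda>\<sigma>. iverson b (ert C1 f) \<sigma> + iverson (\<lambda>s. \<not> b s) (ert C2 f) \<sigma>)"
| "ert (Seq C1 C2) f = ert C1 (ert C2 f)"
| "ert (While b C) f =
      lfp (\<lambda>g \<sigma>. iverson (\<lambda>s. \<not> b s) f \<sigma> + iverson b (ert C g) \<sigma>)"

end

theory Submission
  imports Defs
begin

lemma hmap_hempty[simp]: "hmap hempty = Map.empty"
  unfolding hempty_def by (simp add: Abs_heap_inverse)

lemma hunion_hempty_r[simp]: "hunion h hempty = h"
  unfolding hunion_def by (simp add: hmap_inverse)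

lemma hunion_hempty_l[simp]: "hunion hempty h = h"
  unfolding hunion_def by (simp add: hmap_inverse)

lemma hdisj_hempty[simp]: "hdisj h hempty" "hdisj hempty h"
  unfolding hdisj_def by auto

lemma sepadd_le: "hdisj h1 h2 \<Longrightarrow> sepadd f g (s, hunion h1 h2) \<le> f (s, h1) + g (s, h2)"
  unfolding sepadd_def by (auto intro!: INF_lower2[of "(h1,h2)"])

lemma sepadd_le0: "sepadd f g (s, h) \<le> f (s, h) + g (s, hempty)"
  using sepadd_le[of h hempty f g s] by simp

lemma tsub_mono: "a \<le> a' \<Longrightarrow> tsub a b \<le> tsub a' b"
  unfolding tsub_def by (auto intro: ennreal_minus_mono)

lemma tsub_self[simp]: "tsub a a = 0"
  unfolding tsub_def by simp

lemma sepadd_mono: "g \<le> g' \<Longrightarrow> sepadd f g \<le> sepadd f g'"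
  unfolding sepadd_def le_fun_def
  by (auto intro!: INF_mono' add_left_mono)

lemma sepimp_mono: "g \<le> g' \<Longrightarrow> sepimp f g \<le> sepimp f g'"
  unfolding sepimp_def le_fun_def
  by (auto intro!: SUP_mono' tsub_mono)

lemma subst_rt_mono: "g \<le> g' \<Longrightarrow> subst_rt g x e \<le> subst_rt g' x e"
  unfolding subst_rt_def le_fun_def by auto

lemma ert_mono: "f \<le> g \<Longrightarrow> ert C f \<le> ert C g"
proof (induction C arbitrary: f g)
  case (Tick x)
  then show ?case by (simp add: sepadd_mono)
next
  case (Assign x1 x2)
  then show ?case by (simp add: subst_rt_mono)
next
  case (Alloc x1 x2)
  then show ?case
    by (auto simp: le_fun_def intro!: SUP_mono' sepimp_mono[unfolded le_fun_def, rule_format]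
          subst_rt_mono[unfolded le_fun_def, rule_format])
next
  case (Mut x1 x2)
  then show ?case by (simp add: sepadd_mono sepimp_mono)
next
  case (Lookup x1 x2)
  then show ?case
  proof -
    have "\<And>v. sepadd (pt x2 (\<lambda>_. v)) (sepimp (pt x2 (\<lambda>_. v)) (subst_rt f x1 (\<lambda>_. v)))
       \<le> sepadd (pt x2 (\<lambda>_. v)) (sepimp (pt x2 (\<lambda>_. v)) (subst_rt g x1 (\<lambda>_. v)))"
      by (intro sepadd_mono sepimp_mono subst_rt_mono Lookup)
    then show ?thesis by (auto simp: le_fun_def intro!: INF_mono')
  qed
next
  case (Free x)
  then show ?case by (simp add: sepadd_mono)
next
  case (PChoice C1 x2 C2)
  then show ?case
    by (auto simp: le_fun_def intro!: add_mono mult_left_mono)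
next
  case (If x1 C1 C2)
  then show ?case
    by (auto simp: le_fun_def iverson_def intro!: add_mono)
next
  case (Seq C1 C2)
  then show ?case by simp
next
  case (While x1 C)
  show ?case
    unfolding ert.simps
    by (rule lfp_mono) (use While.prems in \<open>auto simp: le_fun_def iverson_def\<close>)
qed


definition yind :: "'v \<Rightarrow> 'v rt \<Rightarrow> bool" where
  "yind y f \<longleftrightarrow> (\<forall>s v h. f (s(y := v), h) = f (s, h))"

lemma yindD: "yind y f \<Longrightarrow> f (s(y := v), h) = f (s, h)"
  unfolding yind_def by blast

lemma indepD: "indep y e \<Longrightarrow> e (s(y := v)) = e s"
  unfolding indep_def by blast

lemma yind_sepadd: "yind y f \<Longrightarrow> yind y g \<Longrightarrow> yind y (sepadd f g)"
  unfolding yind_def sepadd_def by simp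

lemma yind_sepimp: "yind y f \<Longrightarrow> yind y g \<Longrightarrow> yind y (sepimp f g)"
  unfolding yind_def sepimp_def by simp

lemma yind_tm: "indep y e \<Longrightarrow> yind y (tm e)"
  unfolding yind_def tm_def indep_def by simp

lemma yind_pt: "indep y e \<Longrightarrow> indep y e' \<Longrightarrow> yind y (pt e e')"
  unfolding yind_def pt_def indep_def by simp

lemma yind_pt_any: "indep y e \<Longrightarrow> yind y (pt_any e)"
  unfolding yind_def pt_any_def indep_def by simp

lemma indep_const: "indep y (\<lambda>_. c)"
  unfolding indep_def by simp

lemma yind_emp: "yind y emp_rt"
  unfolding yind_def emp_rt_def by simp

lemma yind_bigsep_n: "(\<And>i. yind y (F i)) \<Longrightarrow> yind y (bigsep_n n F)"
  by (induction n) (auto intro: yind_sepadd yind_emp)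

lemma yind_bigsep: "indep y e \<Longrightarrow> (\<And>i. yind y (F i)) \<Longrightarrow> yind y (bigsep e F)"
  using yind_bigsep_n[of y F]
  unfolding yind_def bigsep_def indep_def by simp

lemma yind_subst: "y \<noteq> x \<Longrightarrow> indep y e \<Longrightarrow> yind y f \<Longrightarrow> yind y (subst_rt f x e)"
  unfolding yind_def subst_rt_def indep_def
proof (intro allI)
  fix s v h
  assume a: "y \<noteq> x" "\<forall>s v. e (s(y := v)) = e s" "\<forall>s v h. f (s(y := v), h) = f (s, h)"
  have "s(y := v, x := e (s(y := v))) = s(x := e s, y := v)"
    using a by (simp add: fun_upd_twist)
  then show "(case (s(y := v), h) of (s, h) \<Rightarrow> f (s(x := e s), h)) = (case (s, h) of (s, h) \<Rightarrow> f (s(x := e s), h))"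
    using a by simp
qed

lemma yind_iverson: "indep y b \<Longrightarrow> yind y f \<Longrightarrow> yind y (iverson b f)"
  unfolding yind_def iverson_def indep_def by simp

lemma yind_Sup: "\<forall>S\<in>M. yind y S \<Longrightarrow> yind y (Sup M)"
  unfolding yind_def by (auto simp: Sup_apply intro!: SUP_cong)

lemma yind_inf_var: "yind y (inf_var y f)"
  unfolding yind_def inf_var_def by simp

lemma inf_var_le: "inf_var y f \<le> f"
proof (rule le_funI, clarify)
  fix s h
  have "(INF v::nat. f (s(y := v), h)) \<le> f (s(y := s y), h)" by (rule INF_lower) simp
  then show "inf_var y f (s, h) \<le> f (s, h)" unfolding inf_var_def by simp
qed

lemma ert_yind: "notin_prog y C \<Longrightarrow> yind y f \<Longrightarrow> yind y (ert C f)"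
proof (induction C arbitrary: f)
  case (Tick x)
  then show ?case by (auto intro: yind_sepadd yind_tm)
next
  case (Assign x1 x2)
  then show ?case by (auto intro: yind_subst)
next
  case (Alloc x1 x2)
  have "yind y (sepimp (bigsep x2 (\<lambda>i. pt (\<lambda>_. v + i - 1) (\<lambda>_. 0))) (subst_rt f x1 (\<lambda>_. v)))" for v
    using Alloc by (auto intro!: yind_sepimp yind_bigsep yind_pt indep_const yind_subst)
  then show ?case unfolding yind_def by simp
next
  case (Mut x1 x2)
  then show ?case by (auto intro: yind_sepadd yind_sepimp yind_pt yind_pt_any)
next
  case (Lookup x1 x2)
  have "yind y (sepadd (pt x2 (\<lambda>_. v)) (sepimp (pt x2 (\<lambda>_. v)) (subst_rt f x1 (\<lambda>_. v))))" for v
    using Lookup by (auto intro!: yind_sepadd yind_sepimp yind_pt indep_const yind_subst)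
  then show ?case unfolding yind_def by simp
next
  case (Free x)
  then show ?case by (auto intro: yind_sepadd yind_pt_any)
next
  case (PChoice C1 x2 C2)
  then have "yind y (ert C1 f)" "yind y (ert C2 f)" "indep y x2" by auto
  then show ?case unfolding yind_def indep_def by simp
next
  case (If x1 C1 C2)
  then have "yind y (iverson x1 (ert C1 f))" "yind y (iverson (\<lambda>s. \<not> x1 s) (ert C2 f))"
    by (auto intro!: yind_iverson simp: indep_def)
  then show ?case unfolding yind_def by simp
next
  case (Seq C1 C2)
  then show ?case by simp
next
  case (While x1 C)
  have mono: "mono (\<lambda>g \<sigma>. iverson (\<lambda>s. \<not> x1 s) f \<sigma> + iverson x1 (ert C g) \<sigma>)"
  proof (rule monoI, rule le_funI)
    fix a b :: "'a rt" and \<sigma>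
    assume ab: "a \<le> b"
    have "ert C a \<sigma> \<le> ert C b \<sigma>" by (rule le_funD[OF ert_mono[OF ab]])
    then show "iverson (\<lambda>s. \<not> x1 s) f \<sigma> + iverson x1 (ert C a) \<sigma> \<le> iverson (\<lambda>s. \<not> x1 s) f \<sigma> + iverson x1 (ert C b) \<sigma>"
      by (auto simp: iverson_def split: prod.splits)
  qed
  show ?case unfolding ert.simps
  proof (induction rule: lfp_ordinal_induct[OF mono])
    case (1 S)
    then have "yind y (iverson (\<lambda>s. \<not> x1 s) f)" "yind y (iverson x1 (ert C S))"
      using While by (auto intro!: yind_iverson simp: indep_def)
    then show ?case unfolding yind_def by simp
  next
    case (2 M)
    then show ?case by (rule yind_Sup)
  qed
qed

lemma part4:
  assumes "notin_prog y C" "ert C f \<le> g"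
  shows "ert C (inf_var y f) \<le> inf_var y g"
proof (clarsimp simp: le_fun_def)
  fix s h
  have yi: "yind y (ert C (inf_var y f))" by (rule ert_yind[OF assms(1) yind_inf_var])
  have "ert C (inf_var y f) (s, h) \<le> g (s(y := v), h)" for v
  proof -
    have "ert C (inf_var y f) (s, h) = ert C (inf_var y f) (s(y := v), h)"
      using yindD[OF yi] by simp
    also have "\<dots> \<le> ert C f (s(y := v), h)"
      by (rule le_funD[OF ert_mono[OF inf_var_le]])
    also have "\<dots> \<le> g (s(y := v), h)" using assms(2) by (simp add: le_fun_def)
    finally show ?thesis .
  qed
  then show "ert C (inf_var y f) (s, h) \<le> inf_var y g (s, h)"
    unfolding inf_var_def by (auto intro: INF_greatest)
qed


lemma part1: "ert (Mut e e') (pt e e') \<le> pt_any e"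
proof (rule le_funI, clarify)
  fix s h
  show "ert (Mut e e') (pt e e') (s, h) \<le> pt_any e (s, h)"
  proof (cases "dom (hmap h) = {e s}")
    case True
    have "sepimp (pt e e') (pt e e') (s, hempty) = 0"
      unfolding sepimp_def by simp
    then have "ert (Mut e e') (pt e e') (s, h) \<le> pt_any e (s, h) + 0"
      using sepadd_le0[of "pt_any e" "sepimp (pt e e') (pt e e')" s h] by simp
    then show ?thesis by simp
  next
    case False
    then show ?thesis by (simp add: pt_any_def)
  qed
qed

lemma part2:
  fixes x y z :: 'v and e :: "'v aexp"
  assumes yx: "y \<noteq> x"
  shows "ert (Lookup x e) (sepadd (emp_and (\<lambda>s. s x = s z)) (pt (subst_exp e x y) (\<lambda>s. s z)))
              \<le> sepadd (emp_and (\<lambda>s. s x = s y)) (pt e (\<lambda>s. s z))"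
proof (rule le_funI, clarify)
  fix s h
  define F :: "'v rt" where "F = sepadd (emp_and (\<lambda>s. s x = s z)) (pt (subst_exp e x y) (\<lambda>s. s z))"
  show "ert (Lookup x e) F (s, h) \<le> sepadd (emp_and (\<lambda>s. s x = s y)) (pt e (\<lambda>s. s z)) (s, h)"
  proof (cases "s x = s y \<and> dom (hmap h) = {e s} \<and> hmap h (e s) = Some (s z)")
    case True
    have each: "tsub (subst_rt F x (\<lambda>_. s z) (s, hunion hempty h')) (pt e (\<lambda>_. s z) (s, h')) = 0" for h'
    proof (cases "dom (hmap h') = {e s} \<and> hmap h' (e s) = Some (s z)")
      case True2: True
      define s' where "s' = s(x := s z)"
      have e1: "subst_exp e x y s' = e s"
        unfolding subst_exp_def s'_def using yx True
        by (metis fun_upd_triv fun_upd_upd fun_upd_other)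
      have e2: "s' z = s z" unfolding s'_def by simp
      have e3: "s' x = s' z" unfolding s'_def by simp
      have "F (s', h') \<le> emp_and (\<lambda>s. s x = s z) (s', hempty) + pt (subst_exp e x y) (\<lambda>s. s z) (s', h')"
        unfolding F_def using sepadd_le[of hempty h' "emp_and (\<lambda>s. s x = s z)" _ s'] by simp
      also have "\<dots> = 0" using e1 e2 e3 True2 by (simp add: emp_and_def pt_def)
      finally have "F (s', h') = 0" by simp
      then show ?thesis unfolding subst_rt_def s'_def tsub_def by simp
    next
      case False
      then show ?thesis by (auto simp: pt_def tsub_def)
    qed
    have sp: "sepimp (pt e (\<lambda>_. s z)) (subst_rt F x (\<lambda>_. s z)) (s, hempty) = 0"
      unfolding sepimp_def using each by simp
    have "ert (Lookup x e) F (s, h) \<le>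
        sepadd (pt e (\<lambda>_. s z)) (sepimp (pt e (\<lambda>_. s z)) (subst_rt F x (\<lambda>_. s z))) (s, h)"
      by (simp, rule INF_lower) simp
    also have "\<dots> \<le> pt e (\<lambda>_. s z) (s, h) + 0"
      using sepadd_le0[of "pt e (\<lambda>_. s z)" "sepimp (pt e (\<lambda>_. s z)) (subst_rt F x (\<lambda>_. s z))" s h] sp by simp
    also have "\<dots> = 0" using True by (simp add: pt_def)
    finally show ?thesis by simp
  next
    case False
    have "top \<le> sepadd (emp_and (\<lambda>s. s x = s y)) (pt e (\<lambda>s. s z)) (s, h)"
      unfolding sepadd_def prod.case
    proof (rule INF_greatest)
      fix p assume p: "p \<in> {(h1, h2). hdisj h1 h2 \<and> h = hunion h1 h2}"
      show "top \<le> emp_and (\<lambda>s. s x = s y) (s, fst p) + pt e (\<lambda>s. s z) (s, snd p)"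
      proof (cases "s x = s y \<and> fst p = hempty")
        case True
        then have "snd p = h" using p by auto
        then show ?thesis using True False by (auto simp: pt_def)
      next
        case False
        then show ?thesis by (auto simp: emp_and_def)
      qed
    qed
    then show ?thesis by (simp add: top_unique)
  qed
qed

lemma bigsep_n_cong:
  assumes "\<And>i h. F i (s1, h) = G i (s2, h)"
  shows "bigsep_n n F (s1, h) = bigsep_n n G (s2, h)"
  using assms
proof (induction n arbitrary: h)
  case 0
  then show ?case by (simp add: emp_rt_def)
next
  case (Suc n)
  then show ?case by (simp add: sepadd_def)
qed

lemma part3:
  assumes ind: "indep x e"
  shows "ert (Alloc x e) (bigsep e (\<lambda>i. pt (\<lambda>s. s x + i - 1) (\<lambda>_. 0))) \<le> emp_rt"
proof (rule le_funI, clarify)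
  fix s h
  show "ert (Alloc x e) (bigsep e (\<lambda>i. pt (\<lambda>s. s x + i - 1) (\<lambda>_. 0))) (s, h) \<le> emp_rt (s, h)"
  proof (cases "h = hempty")
    case True
    have eq: "subst_rt (bigsep e (\<lambda>i. pt (\<lambda>s. s x + i - 1) (\<lambda>_. 0))) x (\<lambda>_. v) (s, h')
       = bigsep e (\<lambda>i. pt (\<lambda>_. v + i - 1) (\<lambda>_. 0)) (s, h')" for v h'
    proof -
      have "e (s(x := v)) = e s" using ind by (simp add: indep_def)
      then show ?thesis
        unfolding subst_rt_def bigsep_def
        by (simp, intro bigsep_n_cong) (simp add: pt_def)
    qed
    show ?thesis unfolding True ert.simps sepimp_def
      by (simp add: eq[simplified])
  next
    case False
    then show ?thesis by (simp add: emp_rt_def)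
  qed
qed

theorem mainTheorem10:
  fixes C :: "'v::finite prog"
  assumes "wf_prog C"
  shows "(\<forall>(e::'v aexp) e'. ert (Mut e e') (pt e e') \<le> pt_any e)
       \<and> (\<forall>(x::'v) y z (e::'v aexp). y \<noteq> x \<longrightarrow>
            ert (Lookup x e) (sepadd (emp_and (\<lambda>s. s x = s z)) (pt (subst_exp e x y) (\<lambda>s. s z)))
              \<le> sepadd (emp_and (\<lambda>s. s x = s y)) (pt e (\<lambda>s. s z)))
       \<and> (\<forall>(x::'v) (e::'v aexp). indep x e \<longrightarrow>
            ert (Alloc x e) (bigsep e (\<lambda>i. pt (\<lambda>s. s x + i - 1) (\<lambda>_. 0))) \<le> emp_rt)
       \<and> (\<forall>(f::'v rt) g y. notin_prog y C \<longrightarrow>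
            ert C f \<le> g \<longrightarrow> ert C (inf_var y f) \<le> inf_var y g)"
  by (intro conjI allI impI part1 part2 part3 part4)

end
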